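(* Assume no treatment anticipation, missingness as an absorbing state, random sampling, and Principal Parallel Trends: $$\mathbb{E}[Y_{i2}(0)-Y_{i1}\mid G_i=1,V_i=AO]=\mathbb{E}[Y_{i2}(0)-Y_{i1}\mid G_i=0,V_i=AO].$$ Assume moreover that, conditional on $S_{i2}=1$ and $G_i=g$ ($g\in\{0,1\}$), $\ddot Y_i$ is continuously distributed with finite mean, and that $\pi_1,\pi_0\in(0,1]$ are known. Define $$\Delta^{LB}=\mathbb{E}[\ddot Y_i\mid G_i=1,S_{i2}=1,\ddot Y_i\le \ddot y^1_{\pi_1}]-\mathbb{E}[\ddot Y_i\mid G_i=0,S_{i2}=1,\ddot Y_i\ge \ddot y^0_{1-\pi_0}],$$ $$\Delta^{UB}=\mathbb{E}[\ddot Y_i\mid G_i=1,S_{i2}=1,\ddot Y_i\ge \ddot y^1_{1-\pi_1}]-\mathbb{E}[\ddot Y_i\mid G_i=0,S_{i2}=1,\ddot Y_i\le \ddot y^0_{\pi_0}].$$ Then $$\Delta^{LB}\le \mathrm{ATT}_{AO}\le\Delta^{UB}.$$ Moreover, these bounds are sharp: they are the tightest bounds on $\mathrm{ATT}_{AO}$ that are compatible with the assumptions and the distribution of the observed data.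
   Context: Setting (two groups, two periods). Units $i$ are observed in periods $t\in\{1,2\}$. $G_i\in\{0,1\}$ indicates that unit $i$ is treated in period 2; nobody is treated in period 1. Under SUTVA, each unit has potential outcomes $Y_{i2}(1),Y_{i2}(0)$ and potential selection indicators $S_{i2}(1),S_{i2}(0)\in\{0,1\}$. Here $S=1$ means the outcome is observed and well-defined. The observed quantities are $Y_{i2}=G_iY_{i2}(1)+(1-G_i)Y_{i2}(0)$ and $S_{i2}=G_iS_{i2}(1)+(1-G_i)S_{i2}(0)$. No treatment anticipation: the period-1 outcome $Y_{i1}$ and selection $S_{i1}$ do not depend on the period-2 treatment, so they are common to both treatment regimes. In particular $Y_{i1}=Y_{i1}(0)$. Missingness is absorbing: $S_{i1}=0\Rightarrow S_{i2}=0$, also for both potential selection indicators. Random sampling: $\{Y_{i1},Y_{i2},S_{i1},S_{i2},G_i\}_{i=1}^N$ are i.i.d. Principal strata: $V_i$ is the stratum defined by $(S_{i2}(0),S_{i2}(1))$. The strata are - $AO$ (Always-Observed): $(1,1)$; - $NO$ (Never-Observed): $(0,0)$; - $OC$ (observed only in control): $(1,0)$; - $OT$ (observed only in treatment): $(0,1)$. The target estimand is $\mathrm{ATT}_{AO}=\mathbb{E}[Y_{i2}(1)-Y_{i2}(0)\mid G_i=1,V_i=AO]$. Further notation: - $\ddot Y_i=Y_{i2}-Y_{i1}$. - $\ddot y^g_q=F^{-1}(q)$, where $F$ is the c.d.f. of $\ddot Y$ conditional on $S_2=1,G=g$. - $\pi_1=\Pr(S_{i2}(0)=1\mid G_i=1,S_{i2}(1)=1)$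 and $\pi_0=\Pr(S_{i2}(1)=1\mid G_i=0,S_{i2}(0)=1)$. These are the proportions of Always-Observed units among the units observed in period 2 in the treatment and control group, respectively. *)

theory Defs
  imports "HOL-Probability.Probability"
begin

text \<open>A unit is a point of the probability space M. Boolean-valued random variables
  encode G, S1, S2(0), S2(1); real-valued ones encode Y1, Y2(0), Y2(1).\<close>

definition cond_mean :: "'a measure \<Rightarrow> ('a \<Rightarrow> real) \<Rightarrow> 'a set \<Rightarrow> real" where
  "cond_mean M X A = (LINT x:A|M. X x) / measure M A"

definition cond_cdf :: "'a measure \<Rightarrow> ('a \<Rightarrow> real) \<Rightarrow> 'a set \<Rightarrow> real \<Rightarrow> real" where
  "cond_cdf M X A y = measure M {x \<in> A. X x \<le> y} / measure M A"

text \<open>Generalised inverse F^{-1}(q) = inf {y. F y \<ge> q}, valued in the extended reals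
  (it is -\<infinity> for q = 0 and may be +\<infinity> for q = 1).\<close>
definition cond_quantile :: "'a measure \<Rightarrow> ('a \<Rightarrow> real) \<Rightarrow> 'a set \<Rightarrow> real \<Rightarrow> ereal" where
  "cond_quantile M X A q = Inf {ereal y | y. q \<le> cond_cdf M X A y}"

definition obsY2 :: "('a \<Rightarrow> bool) \<Rightarrow> ('a \<Rightarrow> real) \<Rightarrow> ('a \<Rightarrow> real) \<Rightarrow> 'a \<Rightarrow> real" where
  "obsY2 G Y20 Y21 x = (if G x then Y21 x else Y20 x)"

definition obsS2 :: "('a \<Rightarrow> bool) \<Rightarrow> ('a \<Rightarrow> bool) \<Rightarrow> ('a \<Rightarrow> bool) \<Rightarrow> 'a \<Rightarrow> bool" where
  "obsS2 G S20 S21 x = (if G x then S21 x else S20 x)"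

definition Ydd :: "('a \<Rightarrow> bool) \<Rightarrow> ('a \<Rightarrow> real) \<Rightarrow> ('a \<Rightarrow> real) \<Rightarrow> ('a \<Rightarrow> real) \<Rightarrow> 'a \<Rightarrow> real" where
  "Ydd G Y1 Y20 Y21 x = obsY2 G Y20 Y21 x - Y1 x"

definition AO_grp :: "'a measure \<Rightarrow> ('a \<Rightarrow> bool) \<Rightarrow> ('a \<Rightarrow> bool) \<Rightarrow> ('a \<Rightarrow> bool) \<Rightarrow> bool \<Rightarrow> 'a set" where
  "AO_grp M G S20 S21 g = {x \<in> space M. G x = g \<and> S20 x \<and> S21 x}"

definition obs_grp :: "'a measure \<Rightarrow> ('a \<Rightarrow> bool) \<Rightarrow> ('a \<Rightarrow> bool) \<Rightarrow> ('a \<Rightarrow> bool) \<Rightarrow> bool \<Rightarrow> 'a set" where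
  "obs_grp M G S20 S21 g = {x \<in> space M. G x = g \<and> obsS2 G S20 S21 x}"

definition pi1 :: "'a measure \<Rightarrow> ('a \<Rightarrow> bool) \<Rightarrow> ('a \<Rightarrow> bool) \<Rightarrow> ('a \<Rightarrow> bool) \<Rightarrow> real" where
  "pi1 M G S20 S21 = measure M (AO_grp M G S20 S21 True) / measure M {x \<in> space M. G x \<and> S21 x}"

definition pi0 :: "'a measure \<Rightarrow> ('a \<Rightarrow> bool) \<Rightarrow> ('a \<Rightarrow> bool) \<Rightarrow> ('a \<Rightarrow> bool) \<Rightarrow> real" where
  "pi0 M G S20 S21 = measure M (AO_grp M G S20 S21 False) / measure M {x \<in> space M. \<not> G x \<and> S20 x}"

definition ATT_AO :: "'a measure \<Rightarrow> ('a \<Rightarrow> bool) \<Rightarrow> ('a \<Rightarrow> real) \<Rightarrow> ('a \<Rightarrow> real) \<Rightarrow> ('a \<Rightarrow> bool) \<Rightarrow> ('a \<Rightarrow> bool) \<Rightarrow> real" where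
  "ATT_AO M G Y20 Y21 S20 S21 = cond_mean M (\<lambda>x. Y21 x - Y20 x) (AO_grp M G S20 S21 True)"

text \<open>No anticipation is built in: Y1 and S1 are single variables common to both
  regimes. Random sampling (i.i.d. units) is built in by modelling the population
  distribution of one generic unit.\<close>
definition did_model :: "'a measure \<Rightarrow> ('a \<Rightarrow> bool) \<Rightarrow> ('a \<Rightarrow> real) \<Rightarrow> ('a \<Rightarrow> bool)
    \<Rightarrow> ('a \<Rightarrow> real) \<Rightarrow> ('a \<Rightarrow> real) \<Rightarrow> ('a \<Rightarrow> bool) \<Rightarrow> ('a \<Rightarrow> bool) \<Rightarrow> bool" where
  "did_model M G Y1 S1 Y20 Y21 S20 S21 \<longleftrightarrow>
     prob_space M \<and>
     G \<in> measurable M (count_space UNIV) \<and> S1 \<in> measurable M (count_space UNIV) \<and>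
     S20 \<in> measurable M (count_space UNIV) \<and> S21 \<in> measurable M (count_space UNIV) \<and>
     Y1 \<in> borel_measurable M \<and> Y20 \<in> borel_measurable M \<and> Y21 \<in> borel_measurable M \<and>
     (\<forall>x\<in>space M. \<not> S1 x \<longrightarrow> \<not> S20 x \<and> \<not> S21 x) \<and>
     set_integrable M (AO_grp M G S20 S21 True) (\<lambda>x. Y20 x - Y1 x) \<and>
     cond_mean M (\<lambda>x. Y20 x - Y1 x) (AO_grp M G S20 S21 True)
       = cond_mean M (\<lambda>x. Y20 x - Y1 x) (AO_grp M G S20 S21 False)"

definition Delta_LB :: "'a measure \<Rightarrow> ('a \<Rightarrow> bool) \<Rightarrow> ('a \<Rightarrow> real) \<Rightarrow> ('a \<Rightarrow> bool) \<Rightarrow> real \<Rightarrow> real \<Rightarrow> real" where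
  "Delta_LB M G D S2 p1 p0 =
     (let A1 = {x \<in> space M. G x \<and> S2 x}; A0 = {x \<in> space M. \<not> G x \<and> S2 x} in
       cond_mean M D {x \<in> A1. ereal (D x) \<le> cond_quantile M D A1 p1}
     - cond_mean M D {x \<in> A0. cond_quantile M D A0 (1 - p0) \<le> ereal (D x)})"

definition Delta_UB :: "'a measure \<Rightarrow> ('a \<Rightarrow> bool) \<Rightarrow> ('a \<Rightarrow> real) \<Rightarrow> ('a \<Rightarrow> bool) \<Rightarrow> real \<Rightarrow> real \<Rightarrow> real" where
  "Delta_UB M G D S2 p1 p0 =
     (let A1 = {x \<in> space M. G x \<and> S2 x}; A0 = {x \<in> space M. \<not> G x \<and> S2 x} in
       cond_mean M D {x \<in> A1. cond_quantile M D A1 (1 - p1) \<le> ereal (D x)}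
     - cond_mean M D {x \<in> A0. ereal (D x) \<le> cond_quantile M D A0 p0})"

end

theory Submission
  imports Defs
begin


lemma bathtub:
  fixes D :: "'a \<Rightarrow> real"
  assumes fm: "finite_measure M" and sets: "A \<in> sets M" "L \<in> sets M" "B \<in> sets M"
   and sub: "L \<subseteq> A" "B \<subseteq> A" and int: "set_integrable M A D"
   and eq: "measure M B = measure M L"
   and lo: "\<forall>x\<in>L. ereal (D x) \<le> t" and hi: "\<forall>x\<in>A-L. t \<le> ereal (D x)"
  shows "(LINT x:L|M. D x) \<le> (LINT x:B|M. D x)"
proof -
  interpret finite_measure M by fact
  have intL: "set_integrable M L D" using set_integrable_subset[OF int sets(2) sub(1)] .
  have intB: "set_integrable M B D" using set_integrable_subset[OF int sets(3) sub(2)] .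
  define r where "r = real_of_ereal t"
  have key: "(LINT x:S|M. D x) = (LINT x:S|M. D x - r) + r * measure M S"
    if S: "S \<in> sets M" "set_integrable M S D" for S
  proof -
    have c: "set_integrable M S (\<lambda>_. r)"
      unfolding set_integrable_def using S by (intro integrable_mult_indicator) auto
    have "(LINT x:S|M. D x - r) = (LINT x:S|M. D x) - (LINT x:S|M. r)"
      using set_integral_diff(2)[OF S(2) c] .
    moreover have "(LINT x:S|M. r) = measure M S * r"
      using set_integral_const[OF S(1), of r] emeasure_real[of S] by simp
    ultimately show ?thesis by simp
  qed
  have AE: "AE x in M. indicator L x * (D x - r) \<le> indicator B x * (D x - r)"
  proof (cases t)
    case (real r')
    hence rr: "r = r'" by (simp add: r_def)
    show ?thesis
    proof (rule AE_I2)
      fix x assume "x \<in> space M"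
      show "indicator L x * (D x - r) \<le> indicator B x * (D x - r)"
        using lo hi sub real rr by (auto simp: indicator_def)
    qed
  next
    case PInf
    hence LA: "L = A" using hi sub by auto
    have "measure M (A - B) = 0" using finite_measure_Diff[OF sets(1) sets(3) sub(2)] eq LA by simp
    hence "A - B \<in> null_sets M" using sets by (auto simp: null_sets_def emeasure_eq_measure)
    from AE_not_in[OF this] show ?thesis
      by eventually_elim (use LA sub in \<open>auto simp: indicator_def\<close>)
  next
    case MInf
    hence LA: "L = {}" using lo by auto
    have "measure M B = 0" using eq LA by simp
    hence "B \<in> null_sets M" using sets by (auto simp: null_sets_def emeasure_eq_measure)
    from AE_not_in[OF this] show ?thesis
      by eventually_elim (use LA in \<open>auto simp: indicator_def\<close>)
  qed
  have cL: "set_integrable M L (\<lambda>_. r)" "set_integrable M B (\<lambda>_. r)"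
      unfolding set_integrable_def using sets by (intro integrable_mult_indicator; auto)+
  have iL: "set_integrable M L (\<lambda>x. D x - r)" using set_integral_diff(1)[OF intL cL(1)] .
  have iB: "set_integrable M B (\<lambda>x. D x - r)" using set_integral_diff(1)[OF intB cL(2)] .
  have "(LINT x:L|M. D x - r) \<le> (LINT x:B|M. D x - r)"
    using iL iB AE unfolding set_integrable_def set_lebesgue_integral_def
    by (intro integral_mono_AE) auto
  then show ?thesis using key[OF sets(2) intL] key[OF sets(3) intB] eq by simp
qed



lemma quantile_meas:
  fixes D :: "'a \<Rightarrow> real"
  assumes fm: "finite_measure M" and A: "A \<in> sets M" and pos: "measure M A > 0"
   and Dm: "D \<in> borel_measurable M" and noat: "\<And>y. measure M {x\<in>A. D x = y} = 0"
   and p: "0 < p" "p \<le> 1"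
  shows "measure M {x\<in>A. ereal (D x) \<le> cond_quantile M D A p} = p * measure M A
       \<and> measure M {x\<in>A. ereal (D x) < cond_quantile M D A p} = p * measure M A"
proof -
  interpret finite_measure M by fact
  have As: "A \<subseteq> space M" using A sets.sets_into_space by blast
  have ms: "{x\<in>A. P x} \<in> sets M" if "{x\<in>space M. P x} \<in> sets M" for P
  proof -
    have "{x\<in>A. P x} = A \<inter> {x\<in>space M. P x}" using As by auto
    thus ?thesis using A that by auto
  qed
  have [measurable]: "D \<in> borel_measurable M" by fact
  have mle: "{x\<in>A. D x \<le> y} \<in> sets M" for y by (rule ms) measurable
  have mlt: "{x\<in>A. D x < y} \<in> sets M" for y by (rule ms) measurable
  have meq: "{x\<in>A. D x = y} \<in> sets M" for y by (rule ms) measurable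
  define F where "F y = measure M {x\<in>A. D x \<le> y}" for y
  have cdf: "(p \<le> cond_cdf M D A y) = (p * measure M A \<le> F y)" for y
    by (simp add: cond_cdf_def F_def pos_le_divide_eq pos)
  have mono: "F y \<le> F z" if "y \<le> z" for y z
    unfolding F_def using that by (intro finite_measure_mono mle) auto
  have lt_eq: "measure M {x\<in>A. D x < r} = F r" for r
  proof -
    have "{x\<in>A. D x < r} = {x\<in>A. D x \<le> r} - {x\<in>A. D x = r}" by auto
    hence "measure M {x\<in>A. D x < r} = F r - measure M {x\<in>A. D x = r}"
      unfolding F_def by (simp add: finite_measure_Diff mle meq subset_eq)
    thus ?thesis using noat by simp
  qed
  have L1: "(\<lambda>n. F (r + inverse (real (Suc n)))) \<longlonglongrightarrow> F r" for r
  proof -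
    have "(\<lambda>n. measure M {x\<in>A. D x \<le> r + inverse (real (Suc n))}) \<longlonglongrightarrow>
        measure M (\<Inter>n. {x\<in>A. D x \<le> r + inverse (real (Suc n))})"
    proof (rule finite_Lim_measure_decseq)
      show "range (\<lambda>n. {x\<in>A. D x \<le> r + inverse (real (Suc n))}) \<subseteq> sets M" using mle by auto
      show "decseq (\<lambda>n. {x\<in>A. D x \<le> r + inverse (real (Suc n))})"
      proof (rule decseq_SucI)
        fix n
        have "inverse (real (Suc (Suc n))) \<le> inverse (real (Suc n))"
          by (rule le_imp_inverse_le) auto
        hence h: "r + inverse (real (Suc (Suc n))) \<le> r + inverse (real (Suc n))" by linarith
        show "{x\<in>A. D x \<le> r + inverse (real (Suc (Suc n)))} \<subseteq> {x\<in>A. D x \<le> r + inverse (real (Suc n))}"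
          by (auto dest: order_trans[OF _ h] simp del: of_nat_Suc)
      qed
    qed
    moreover have "(\<Inter>n. {x\<in>A. D x \<le> r + inverse (real (Suc n))}) = {x\<in>A. D x \<le> r}"
    proof (intro equalityI subsetI)
      fix x assume x: "x \<in> (\<Inter>n. {x\<in>A. D x \<le> r + inverse (real (Suc n))})"
      show "x \<in> {x\<in>A. D x \<le> r}"
      proof (rule ccontr)
        assume "x \<notin> {x\<in>A. D x \<le> r}"
        with x have "0 < D x - r" by auto
        then obtain n where n: "inverse (real (Suc n)) < D x - r" using reals_Archimedean by blast
        from x have "D x \<le> r + inverse (real (Suc n))" by blast
        with n show False by linarith
      qed
    next
      fix x assume "x \<in> {x\<in>A. D x \<le> r}"
      thus "x \<in> (\<Inter>n. {x\<in>A. D x \<le> r + inverse (real (Suc n))})"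
        by (auto intro: order_trans[of _ r] simp: add_increasing2)
    qed
    ultimately show ?thesis unfolding F_def by simp
  qed
  have L2: "(\<lambda>n. F (r - inverse (real (Suc n)))) \<longlonglongrightarrow> F r" for r
  proof -
    have "(\<lambda>n. measure M {x\<in>A. D x \<le> r - inverse (real (Suc n))}) \<longlonglongrightarrow>
        measure M (\<Union>n. {x\<in>A. D x \<le> r - inverse (real (Suc n))})"
    proof (rule finite_Lim_measure_incseq)
      show "range (\<lambda>n. {x\<in>A. D x \<le> r - inverse (real (Suc n))}) \<subseteq> sets M" using mle by auto
      show "incseq (\<lambda>n. {x\<in>A. D x \<le> r - inverse (real (Suc n))})"
      proof (rule incseq_SucI)
        fix n
        have "inverse (real (Suc (Suc n))) \<le> inverse (real (Suc n))"
          by (rule le_imp_inverse_le) auto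
        hence h: "r - inverse (real (Suc n)) \<le> r - inverse (real (Suc (Suc n)))" by linarith
        show "{x\<in>A. D x \<le> r - inverse (real (Suc n))} \<subseteq> {x\<in>A. D x \<le> r - inverse (real (Suc (Suc n)))}"
          by (auto dest: order_trans[OF _ h] simp del: of_nat_Suc)
      qed
    qed
    moreover have "(\<Union>n. {x\<in>A. D x \<le> r - inverse (real (Suc n))}) = {x\<in>A. D x < r}"
    proof (intro equalityI subsetI)
      fix x assume "x \<in> (\<Union>n. {x\<in>A. D x \<le> r - inverse (real (Suc n))})"
      then obtain n where "x \<in> A" "D x \<le> r - inverse (real (Suc n))" by auto
      moreover have "0 < inverse (real (Suc n))" by simp
      ultimately have "D x < r" by linarith
      thus "x \<in> {x\<in>A. D x < r}" using \<open>x \<in> A\<close> by auto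
    next
      fix x assume x: "x \<in> {x\<in>A. D x < r}"
      hence "0 < r - D x" by auto
      then obtain n where n: "inverse (real (Suc n)) < r - D x" using reals_Archimedean by blast
      hence "D x \<le> r - inverse (real (Suc n))" by linarith
      with x show "x \<in> (\<Union>n. {x\<in>A. D x \<le> r - inverse (real (Suc n))})" by auto
    qed
    ultimately show ?thesis using lt_eq[of r, unfolded F_def] unfolding F_def by simp
  qed
  have L3: "(\<lambda>n. F (real n)) \<longlonglongrightarrow> measure M A"
  proof -
    have "(\<lambda>n. measure M {x\<in>A. D x \<le> real n}) \<longlonglongrightarrow> measure M (\<Union>n. {x\<in>A. D x \<le> real n})"
    proof (rule finite_Lim_measure_incseq)
      show "range (\<lambda>n. {x\<in>A. D x \<le> real n}) \<subseteq> sets M" using mle by auto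
      show "incseq (\<lambda>n. {x\<in>A. D x \<le> real n})"
        by (rule incseq_SucI) auto
    qed
    moreover have "(\<Union>n. {x\<in>A. D x \<le> real n}) = A"
    proof (intro equalityI subsetI)
      fix x assume "x \<in> A"
      moreover obtain n where "D x \<le> real n" using real_arch_simple by blast
      ultimately show "x \<in> (\<Union>n. {x\<in>A. D x \<le> real n})" by auto
    qed auto
    ultimately show ?thesis unfolding F_def by simp
  qed
  have L4: "(\<lambda>n. F (- real n)) \<longlonglongrightarrow> 0"
  proof -
    have "(\<lambda>n. measure M {x\<in>A. D x \<le> - real n}) \<longlonglongrightarrow> measure M (\<Inter>n. {x\<in>A. D x \<le> - real n})"
    proof (rule finite_Lim_measure_decseq)
      show "range (\<lambda>n. {x\<in>A. D x \<le> - real n}) \<subseteq> sets M" using mle by auto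
      show "decseq (\<lambda>n. {x\<in>A. D x \<le> - real n})"
        by (rule decseq_SucI) auto
    qed
    moreover have "(\<Inter>n. {x\<in>A. D x \<le> - real n}) = {}"
    proof (intro equalityI subsetI)
      fix x assume x: "x \<in> (\<Inter>n. {x\<in>A. D x \<le> - real n})"
      obtain n where "- D x \<le> real n" using real_arch_simple by blast
      moreover have "D x \<le> - real (Suc n)" using x by blast
      ultimately show "x \<in> {}" by simp
    qed auto
    ultimately show ?thesis unfolding F_def by simp
  qed
  define S where "S = {ereal y | y. p \<le> cond_cdf M D A y}"
  have q: "cond_quantile M D A p = Inf S" by (simp add: cond_quantile_def S_def)
  have Sm: "ereal y \<in> S \<longleftrightarrow> p * measure M A \<le> F y" for y
    by (auto simp: S_def cdf)
  have Sfin: "s \<in> S \<Longrightarrow> \<exists>y. s = ereal y \<and> p * measure M A \<le> F y" for s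
    by (auto simp: S_def cdf)
  have below: "p * measure M A \<le> F y" if h: "Inf S < ereal y" for y
  proof -
    obtain s where "s \<in> S" "s < ereal y" using h unfolding Inf_less_iff by blast
    then obtain z where "s = ereal z" "p * measure M A \<le> F z" using Sfin by blast
    with \<open>s < ereal y\<close> mono[of z y] show ?thesis by auto
  qed
  have above: "F y < p * measure M A" if "ereal y < Inf S" for y
  proof (rule ccontr)
    assume "\<not> F y < p * measure M A"
    hence "ereal y \<in> S" using Sm by simp
    hence "Inf S \<le> ereal y" by (rule Inf_lower)
    with that show False by simp
  qed
  have ppos: "0 < p * measure M A" using p pos by simp
  show ?thesis
  proof (cases "Inf S")
    case (real r)
    have "p * measure M A \<le> F r"
    proof (rule LIMSEQ_le_const[OF L1], intro exI allI impI)
      fix n :: nat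
      show "p * measure M A \<le> F (r + inverse (real (Suc n)))"
        by (rule below) (simp add: real)
    qed
    moreover have "F r \<le> p * measure M A"
    proof (rule LIMSEQ_le_const2[OF L2], intro exI allI impI)
      fix n :: nat
      show "F (r - inverse (real (Suc n))) \<le> p * measure M A"
        using above[of "r - inverse (real (Suc n))"] by (simp add: real)
    qed
    ultimately have "F r = p * measure M A" by simp
    thus ?thesis using lt_eq[of r] by (simp add: q real F_def)
  next
    case PInf
    have "measure M A \<le> p * measure M A"
    proof (rule LIMSEQ_le_const2[OF L3], intro exI allI impI)
      fix n :: nat
      show "F (real n) \<le> p * measure M A"
        using above[of "real n"] by (simp add: PInf)
    qed
    hence "p = 1" using p pos by (simp add: mult_le_cancel_right1)
    moreover have "cond_quantile M D A p = \<infinity>" using q PInf by simp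
    ultimately show ?thesis by simp
  next
    case MInf
    have "p * measure M A \<le> 0"
    proof (rule LIMSEQ_le_const[OF L4], intro exI allI impI)
      fix n :: nat
      show "p * measure M A \<le> F (- real n)"
        by (rule below) (simp add: MInf)
    qed
    with ppos show ?thesis by simp
  qed
qed



lemma tails:
  fixes D :: "'a \<Rightarrow> real"
  assumes fm: "finite_measure M" and A: "A \<in> sets M" and pos: "measure M A > 0"
   and Dm: "D \<in> borel_measurable M" and noat: "\<And>y. measure M {x\<in>A. D x = y} = 0"
   and int: "set_integrable M A D"
   and p: "0 < p" "p \<le> 1"
  shows "{x\<in>A. ereal (D x) \<le> cond_quantile M D A p} \<in> sets M
     \<and> measure M {x\<in>A. ereal (D x) \<le> cond_quantile M D A p} = p * measure M A
     \<and> (\<forall>B. B \<in> sets M \<longrightarrow> B \<subseteq> A \<longrightarrow> measure M B = p * measure M A \<longrightarrow>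
            cond_mean M D {x\<in>A. ereal (D x) \<le> cond_quantile M D A p} \<le> cond_mean M D B)"
   and "{x\<in>A. cond_quantile M D A (1 - p) \<le> ereal (D x)} \<in> sets M
     \<and> measure M {x\<in>A. cond_quantile M D A (1 - p) \<le> ereal (D x)} = p * measure M A
     \<and> (\<forall>B. B \<in> sets M \<longrightarrow> B \<subseteq> A \<longrightarrow> measure M B = p * measure M A \<longrightarrow>
            cond_mean M D B \<le> cond_mean M D {x\<in>A. cond_quantile M D A (1 - p) \<le> ereal (D x)})"
proof -
  interpret finite_measure M by fact
  have As: "A \<subseteq> space M" using A sets.sets_into_space by blast
  have ms: "{x\<in>A. P x} \<in> sets M" if "{x\<in>space M. P x} \<in> sets M" for P
  proof -
    have "{x\<in>A. P x} = A \<inter> {x\<in>space M. P x}" using As by auto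
    thus ?thesis using A that by auto
  qed
  have [measurable]: "D \<in> borel_measurable M" by fact
  have ppos: "0 < p * measure M A" using p pos by simp
  define q where "q = cond_quantile M D A p"
  define L where "L = {x\<in>A. ereal (D x) \<le> q}"
  have Ls: "L \<in> sets M" unfolding L_def by (rule ms) measurable
  have Lm: "measure M L = p * measure M A"
    using quantile_meas[OF fm A pos Dm noat p] by (simp add: L_def q_def)
  show "{x\<in>A. ereal (D x) \<le> cond_quantile M D A p} \<in> sets M
     \<and> measure M {x\<in>A. ereal (D x) \<le> cond_quantile M D A p} = p * measure M A
     \<and> (\<forall>B. B \<in> sets M \<longrightarrow> B \<subseteq> A \<longrightarrow> measure M B = p * measure M A \<longrightarrow>
            cond_mean M D {x\<in>A. ereal (D x) \<le> cond_quantile M D A p} \<le> cond_mean M D B)"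
    unfolding q_def[symmetric] L_def[symmetric]
  proof (intro conjI allI impI Ls Lm)
    fix B assume B: "B \<in> sets M" "B \<subseteq> A" "measure M B = p * measure M A"
    have "(LINT x:L|M. D x) \<le> (LINT x:B|M. D x)"
      by (rule bathtub[OF fm A Ls B(1) _ B(2) int, where t=q]) (use Lm B(3) in \<open>auto simp: L_def\<close>)
    thus "cond_mean M D L \<le> cond_mean M D B"
      unfolding cond_mean_def using B(3) Lm ppos by (simp add: divide_right_mono)
  qed
  define q' where "q' = cond_quantile M D A (1 - p)"
  define U where "U = {x\<in>A. q' \<le> ereal (D x)}"
  have Us: "U \<in> sets M" unfolding U_def by (rule ms) measurable
  have Um: "measure M U = p * measure M A"
  proof (cases "p = 1")
    case True
    have "q' \<le> ereal (D x)" for x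
      unfolding q'_def cond_quantile_def True
      by (rule Inf_lower) (auto simp: cond_cdf_def)
    hence "U = A" by (auto simp: U_def)
    thus ?thesis using True by simp
  next
    case False
    have "0 < 1 - p" "1 - p \<le> 1" using p False by auto
    from quantile_meas[OF fm A pos Dm noat this]
    have lt: "measure M {x\<in>A. ereal (D x) < q'} = (1 - p) * measure M A" by (simp add: q'_def)
    have ltS: "{x\<in>A. ereal (D x) < q'} \<in> sets M" by (rule ms) measurable
    have "U = A - {x\<in>A. ereal (D x) < q'}" by (auto simp: U_def not_less)
    hence "measure M U = measure M A - measure M {x\<in>A. ereal (D x) < q'}"
      using finite_measure_Diff[OF A ltS] by auto
    thus ?thesis using lt by (simp add: algebra_simps)
  qed
  have intm: "set_integrable M A (\<lambda>x. - D x)"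
    using int unfolding set_integrable_def by simp
  show "{x\<in>A. cond_quantile M D A (1 - p) \<le> ereal (D x)} \<in> sets M
     \<and> measure M {x\<in>A. cond_quantile M D A (1 - p) \<le> ereal (D x)} = p * measure M A
     \<and> (\<forall>B. B \<in> sets M \<longrightarrow> B \<subseteq> A \<longrightarrow> measure M B = p * measure M A \<longrightarrow>
            cond_mean M D B \<le> cond_mean M D {x\<in>A. cond_quantile M D A (1 - p) \<le> ereal (D x)})"
    unfolding q'_def[symmetric] U_def[symmetric]
  proof (intro conjI allI impI Us Um)
    fix B assume B: "B \<in> sets M" "B \<subseteq> A" "measure M B = p * measure M A"
    have neg: "ereal (- D x) = - ereal (D x)" for x by simp
    have "(LINT x:U|M. - D x) \<le> (LINT x:B|M. - D x)"
      by (rule bathtub[OF fm A Us B(1) _ B(2) intm, where t="- q'"])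
        (use Um B(3) in \<open>auto simp: U_def neg ereal_minus_le_minus ereal_minus_less_minus not_le less_imp_le simp del: uminus_ereal.simps\<close>)
    moreover have "(LINT x:U|M. - D x) = - (LINT x:U|M. D x)"
      by (rule set_integral_uminus, rule set_integrable_subset[OF int Us]) (auto simp: U_def)
    moreover have "(LINT x:B|M. - D x) = - (LINT x:B|M. D x)"
      by (rule set_integral_uminus, rule set_integrable_subset[OF int B(1) B(2)])
    ultimately have "(LINT x:B|M. D x) \<le> (LINT x:U|M. D x)" by simp
    thus "cond_mean M D B \<le> cond_mean M D U"
      unfolding cond_mean_def using B(3) Um ppos by (simp add: divide_right_mono)
  qed
qed



theorem proposition1:
  fixes M :: "'a measure" and G S1 S20 S21 :: "'a \<Rightarrow> bool" and Y1 Y20 Y21 :: "'a \<Rightarrow> real"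
  assumes model: "did_model M G Y1 S1 Y20 Y21 S20 S21"
    and pos: "\<And>g. 0 < measure M (obs_grp M G S20 S21 g)"
    and cont: "\<And>g y. measure M {x \<in> obs_grp M G S20 S21 g. Ydd G Y1 Y20 Y21 x = y} = 0"
    and fin: "\<And>g. set_integrable M (obs_grp M G S20 S21 g) (Ydd G Y1 Y20 Y21)"
    and pi1: "0 < pi1 M G S20 S21" "pi1 M G S20 S21 \<le> 1"
    and pi0: "0 < pi0 M G S20 S21" "pi0 M G S20 S21 \<le> 1"
  shows "Delta_LB M G (Ydd G Y1 Y20 Y21) (obsS2 G S20 S21) (pi1 M G S20 S21) (pi0 M G S20 S21)
           \<le> ATT_AO M G Y20 Y21 S20 S21
       \<and> ATT_AO M G Y20 Y21 S20 S21
           \<le> Delta_UB M G (Ydd G Y1 Y20 Y21) (obsS2 G S20 S21) (pi1 M G S20 S21) (pi0 M G S20 S21)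
       \<and> (\<exists>Y20' Y21' S20' S21'. did_model M G Y1 S1 Y20' Y21' S20' S21'
            \<and> (\<forall>x\<in>space M. obsY2 G Y20' Y21' x = obsY2 G Y20 Y21 x
                            \<and> obsS2 G S20' S21' x = obsS2 G S20 S21 x)
            \<and> pi1 M G S20' S21' = pi1 M G S20 S21 \<and> pi0 M G S20' S21' = pi0 M G S20 S21
            \<and> ATT_AO M G Y20' Y21' S20' S21'
                = Delta_LB M G (Ydd G Y1 Y20 Y21) (obsS2 G S20 S21) (pi1 M G S20 S21) (pi0 M G S20 S21))
       \<and> (\<exists>Y20' Y21' S20' S21'. did_model M G Y1 S1 Y20' Y21' S20' S21'
            \<and> (\<forall>x\<in>space M. obsY2 G Y20' Y21' x = obsY2 G Y20 Y21 x
                            \<and> obsS2 G S20' S21' x = obsS2 G S20 S21 x)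
            \<and> pi1 M G S20' S21' = pi1 M G S20 S21 \<and> pi0 M G S20' S21' = pi0 M G S20 S21
            \<and> ATT_AO M G Y20' Y21' S20' S21'
                = Delta_UB M G (Ydd G Y1 Y20 Y21) (obsS2 G S20 S21) (pi1 M G S20 S21) (pi0 M G S20 S21))"
proof -
  from model have P: "prob_space M"
    and mG[measurable]: "G \<in> measurable M (count_space UNIV)"
    and mS1[measurable]: "S1 \<in> measurable M (count_space UNIV)"
    and mS20[measurable]: "S20 \<in> measurable M (count_space UNIV)"
    and mS21[measurable]: "S21 \<in> measurable M (count_space UNIV)"
    and mY1[measurable]: "Y1 \<in> borel_measurable M"
    and mY20[measurable]: "Y20 \<in> borel_measurable M"
    and mY21[measurable]: "Y21 \<in> borel_measurable M"
    and absorb: "\<forall>x\<in>space M. \<not> S1 x \<longrightarrow> \<not> S20 x \<and> \<not> S21 x"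
    and intY: "set_integrable M (AO_grp M G S20 S21 True) (\<lambda>x. Y20 x - Y1 x)"
    and ppt: "cond_mean M (\<lambda>x. Y20 x - Y1 x) (AO_grp M G S20 S21 True)
       = cond_mean M (\<lambda>x. Y20 x - Y1 x) (AO_grp M G S20 S21 False)"
    unfolding did_model_def by auto
  interpret prob_space M by (rule P)
  have fm: "finite_measure M" by (rule prob_space.finite_measure[OF P])
  define D where "D = Ydd G Y1 Y20 Y21"
  have Dm[measurable]: "D \<in> borel_measurable M" unfolding D_def Ydd_def obsY2_def by measurable
  define p1 where "p1 = pi1 M G S20 S21"
  define p0 where "p0 = pi0 M G S20 S21"
  define A1 where "A1 = {x\<in>space M. G x \<and> obsS2 G S20 S21 x}"
  define A0 where "A0 = {x\<in>space M. \<not> G x \<and> obsS2 G S20 S21 x}"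
  define AO1 where "AO1 = AO_grp M G S20 S21 True"
  define AO0 where "AO0 = AO_grp M G S20 S21 False"
  have A1e: "A1 = obs_grp M G S20 S21 True" "A1 = {x\<in>space M. G x \<and> S21 x}"
    by (auto simp: A1_def obs_grp_def obsS2_def)
  have A0e: "A0 = obs_grp M G S20 S21 False" "A0 = {x\<in>space M. \<not> G x \<and> S20 x}"
    by (auto simp: A0_def obs_grp_def obsS2_def)
  have A1s: "A1 \<in> sets M" unfolding A1e(2) by measurable
  have A0s: "A0 \<in> sets M" unfolding A0e(2) by measurable
  have AO1s: "AO1 \<in> sets M" unfolding AO1_def AO_grp_def by measurable
  have AO0s: "AO0 \<in> sets M" unfolding AO0_def AO_grp_def by measurable
  have AO1A: "AO1 \<subseteq> A1" by (auto simp: AO1_def AO_grp_def A1e(2))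
  have AO0A: "AO0 \<subseteq> A0" by (auto simp: AO0_def AO_grp_def A0e(2))
  have pos1: "0 < measure M A1" using pos[of True] A1e(1) by simp
  have pos0: "0 < measure M A0" using pos[of False] A0e(1) by simp
  have noat1: "\<And>y. measure M {x\<in>A1. D x = y} = 0" using cont[of True] A1e(1) D_def by simp
  have noat0: "\<And>y. measure M {x\<in>A0. D x = y} = 0" using cont[of False] A0e(1) D_def by simp
  have int1: "set_integrable M A1 D" using fin[of True] A1e(1) D_def by simp
  have int0: "set_integrable M A0 D" using fin[of False] A0e(1) D_def by simp
  have p1: "0 < p1" "p1 \<le> 1" using pi1 p1_def by auto
  have p0: "0 < p0" "p0 \<le> 1" using pi0 p0_def by auto
  have mAO1: "measure M AO1 = p1 * measure M A1"
    using pos1 by (simp add: p1_def pi1_def AO1_def A1e(2)[symmetric])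
  have mAO0: "measure M AO0 = p0 * measure M A0"
    using pos0 by (simp add: p0_def pi0_def AO0_def A0e(2)[symmetric])
  note T1 = tails[OF fm A1s pos1 Dm noat1 int1 p1]
  note T0 = tails[OF fm A0s pos0 Dm noat0 int0 p0]
  define L1 where "L1 = {x\<in>A1. ereal (D x) \<le> cond_quantile M D A1 p1}"
  define U1 where "U1 = {x\<in>A1. cond_quantile M D A1 (1 - p1) \<le> ereal (D x)}"
  define L0 where "L0 = {x\<in>A0. ereal (D x) \<le> cond_quantile M D A0 p0}"
  define U0 where "U0 = {x\<in>A0. cond_quantile M D A0 (1 - p0) \<le> ereal (D x)}"
  have LB: "Delta_LB M G (Ydd G Y1 Y20 Y21) (obsS2 G S20 S21) (pi1 M G S20 S21) (pi0 M G S20 S21)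
      = cond_mean M D L1 - cond_mean M D U0"
    unfolding Delta_LB_def Let_def L1_def U0_def A1_def A0_def D_def p1_def p0_def ..
  have UB: "Delta_UB M G (Ydd G Y1 Y20 Y21) (obsS2 G S20 S21) (pi1 M G S20 S21) (pi0 M G S20 S21)
      = cond_mean M D U1 - cond_mean M D L0"
    unfolding Delta_UB_def Let_def U1_def L0_def A1_def A0_def D_def p1_def p0_def ..
  have ATT: "ATT_AO M G Y20 Y21 S20 S21 = cond_mean M D AO1 - cond_mean M D AO0"
  proof -
    have intD1: "set_integrable M AO1 D" by (rule set_integrable_subset[OF int1 AO1s AO1A])
    have "(LINT x:AO1|M. Y21 x - Y20 x) = (LINT x:AO1|M. D x - (Y20 x - Y1 x))"
      by (rule set_lebesgue_integral_cong[OF AO1s])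
        (auto simp: AO1_def AO_grp_def D_def Ydd_def obsY2_def)
    also have "\<dots> = (LINT x:AO1|M. D x) - (LINT x:AO1|M. Y20 x - Y1 x)"
      by (rule set_integral_diff(2)[OF intD1 intY[folded AO1_def]])
    finally have e1: "cond_mean M (\<lambda>x. Y21 x - Y20 x) AO1
        = cond_mean M D AO1 - cond_mean M (\<lambda>x. Y20 x - Y1 x) AO1"
      unfolding cond_mean_def by (simp add: diff_divide_distrib)
    have "(LINT x:AO0|M. Y20 x - Y1 x) = (LINT x:AO0|M. D x)"
      by (rule set_lebesgue_integral_cong[OF AO0s])
        (auto simp: AO0_def AO_grp_def D_def Ydd_def obsY2_def)
    hence e2: "cond_mean M (\<lambda>x. Y20 x - Y1 x) AO0 = cond_mean M D AO0"
      unfolding cond_mean_def by simp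
    show ?thesis using e1 e2 ppt unfolding ATT_AO_def AO1_def[symmetric] AO0_def[symmetric] by simp
  qed
  have b1: "cond_mean M D L1 \<le> cond_mean M D AO1" using T1(1) AO1s AO1A mAO1 unfolding L1_def by blast
  have b2: "cond_mean M D AO1 \<le> cond_mean M D U1" using T1(2) AO1s AO1A mAO1 unfolding U1_def by blast
  have b3: "cond_mean M D L0 \<le> cond_mean M D AO0" using T0(1) AO0s AO0A mAO0 unfolding L0_def by blast
  have b4: "cond_mean M D AO0 \<le> cond_mean M D U0" using T0(2) AO0s AO0A mAO0 unfolding U0_def by blast
  have sharp: "\<exists>Y20' Y21' S20' S21'. did_model M G Y1 S1 Y20' Y21' S20' S21'
            \<and> (\<forall>x\<in>space M. obsY2 G Y20' Y21' x = obsY2 G Y20 Y21 x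
                            \<and> obsS2 G S20' S21' x = obsS2 G S20 S21 x)
            \<and> pi1 M G S20' S21' = pi1 M G S20 S21 \<and> pi0 M G S20' S21' = pi0 M G S20 S21
            \<and> ATT_AO M G Y20' Y21' S20' S21' = cond_mean M D T1 - cond_mean M D T0"
    if t1[measurable]: "T1 \<in> sets M" and t1A: "T1 \<subseteq> A1" and t1m: "measure M T1 = p1 * measure M A1"
      and t0[measurable]: "T0 \<in> sets M" and t0A: "T0 \<subseteq> A0" and t0m: "measure M T0 = p0 * measure M A0"
    for T1 T0
  proof -
    define c where "c = cond_mean M D T0"
    define S21' where "S21' x = (if G x then S21 x else x \<in> T0)" for x
    define S20' where "S20' x = (if G x then x \<in> T1 else S20 x)" for x
    define Y20' where "Y20' x = (if G x then Y1 x + c else Y20 x)" for x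
    have T1p: "0 < measure M T1" using t1m p1 pos1 by simp
    have AOn1: "AO_grp M G S20' S21' True = T1"
      using t1A sets.sets_into_space[OF t1] by (auto simp: AO_grp_def S20'_def S21'_def A1e(2))
    have AOn0: "AO_grp M G S20' S21' False = T0"
      using t0A sets.sets_into_space[OF t0] by (auto simp: AO_grp_def S20'_def S21'_def A0e(2))
    have n1: "{x\<in>space M. G x \<and> S21' x} = A1" by (auto simp: S21'_def A1e(2))
    have n0: "{x\<in>space M. \<not> G x \<and> S20' x} = A0" by (auto simp: S20'_def A0e(2))
    have pi1': "pi1 M G S20' S21' = p1" unfolding pi1_def AOn1 n1 using t1m pos1 by simp
    have pi0': "pi0 M G S20' S21' = p0" unfolding pi0_def AOn0 n0 using t0m pos0 by simp
    have cint: "set_integrable M T1 (\<lambda>x. Y20' x - Y1 x)"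
    proof -
      have "set_integrable M T1 (\<lambda>_. c)"
        unfolding set_integrable_def by (intro integrable_mult_indicator) auto
      moreover have eq: "\<forall>x\<in>space M. indicator T1 x *\<^sub>R (Y20' x - Y1 x) = indicator T1 x *\<^sub>R c"
        using t1A by (auto simp: indicator_def Y20'_def A1e(2))
      moreover have "integrable M (\<lambda>x. indicator T1 x *\<^sub>R (Y20' x - Y1 x)) = integrable M (\<lambda>x. indicator T1 x *\<^sub>R c)"
        by (rule Bochner_Integration.integrable_cong[OF refl]) (use eq in auto)
      ultimately show ?thesis unfolding set_integrable_def by simp
    qed
    have c1: "(LINT x:T1|M. Y20' x - Y1 x) = (LINT x:T1|M. c)"
      by (rule set_lebesgue_integral_cong[OF t1]) (use t1A in \<open>auto simp: Y20'_def A1e(2)\<close>)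
    have cm1: "cond_mean M (\<lambda>x. Y20' x - Y1 x) T1 = c"
      unfolding cond_mean_def c1 using set_integral_const[OF t1, of c] emeasure_real[of T1] T1p
      by simp
    have c0: "(LINT x:T0|M. Y20' x - Y1 x) = (LINT x:T0|M. D x)"
      by (rule set_lebesgue_integral_cong[OF t0])
        (use t0A in \<open>auto simp: Y20'_def A0e(2) D_def Ydd_def obsY2_def\<close>)
    have cm0: "cond_mean M (\<lambda>x. Y20' x - Y1 x) T0 = c"
      unfolding cond_mean_def c0 c_def ..
    have model': "did_model M G Y1 S1 Y20' Y21 S20' S21'"
      unfolding did_model_def AOn1 AOn0
    proof (intro conjI P)
      show "S20' \<in> measurable M (count_space UNIV)" unfolding S20'_def by measurable
      show "S21' \<in> measurable M (count_space UNIV)" unfolding S21'_def by measurable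
      show "Y20' \<in> borel_measurable M" unfolding Y20'_def by measurable
      show "\<forall>x\<in>space M. \<not> S1 x \<longrightarrow> \<not> S20' x \<and> \<not> S21' x"
        using absorb t1A t0A by (auto simp: S20'_def S21'_def A1e(2) A0e(2))
      show "cond_mean M (\<lambda>x. Y20' x - Y1 x) T1 = cond_mean M (\<lambda>x. Y20' x - Y1 x) T0"
        using cm1 cm0 by simp
    qed (use cint in auto)
    have intDT1: "set_integrable M T1 D" by (rule set_integrable_subset[OF int1 t1 t1A])
    have cT1: "set_integrable M T1 (\<lambda>_. c)"
      unfolding set_integrable_def by (intro integrable_mult_indicator) auto
    have "(LINT x:T1|M. Y21 x - Y20' x) = (LINT x:T1|M. D x - c)"
      by (rule set_lebesgue_integral_cong[OF t1])
        (use t1A in \<open>auto simp: Y20'_def A1e(2) D_def Ydd_def obsY2_def\<close>)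
    also have "\<dots> = (LINT x:T1|M. D x) - measure M T1 * c"
      using set_integral_diff(2)[OF intDT1 cT1] set_integral_const[OF t1, of c] emeasure_real[of T1]
      by simp
    finally have "ATT_AO M G Y20' Y21 S20' S21' = cond_mean M D T1 - c"
      unfolding ATT_AO_def AOn1 cond_mean_def using T1p by (simp add: diff_divide_distrib)
    moreover have "\<forall>x\<in>space M. obsY2 G Y20' Y21 x = obsY2 G Y20 Y21 x
                            \<and> obsS2 G S20' S21' x = obsS2 G S20 S21 x"
      by (simp add: obsY2_def obsS2_def Y20'_def S20'_def S21'_def)
    ultimately show ?thesis using model' pi1' pi0' unfolding p1_def p0_def c_def by blast
  qed
  have s1: "\<exists>Y20' Y21' S20' S21'. did_model M G Y1 S1 Y20' Y21' S20' S21'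
            \<and> (\<forall>x\<in>space M. obsY2 G Y20' Y21' x = obsY2 G Y20 Y21 x
                            \<and> obsS2 G S20' S21' x = obsS2 G S20 S21 x)
            \<and> pi1 M G S20' S21' = pi1 M G S20 S21 \<and> pi0 M G S20' S21' = pi0 M G S20 S21
            \<and> ATT_AO M G Y20' Y21' S20' S21' = cond_mean M D L1 - cond_mean M D U0"
    by (rule sharp) (use T1(1) T0(2) in \<open>auto simp: L1_def U0_def\<close>)
  have s2: "\<exists>Y20' Y21' S20' S21'. did_model M G Y1 S1 Y20' Y21' S20' S21'
            \<and> (\<forall>x\<in>space M. obsY2 G Y20' Y21' x = obsY2 G Y20 Y21 x
                            \<and> obsS2 G S20' S21' x = obsS2 G S20 S21 x)
            \<and> pi1 M G S20' S21' = pi1 M G S20 S21 \<and> pi0 M G S20' S21' = pi0 M G S20 S21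
            \<and> ATT_AO M G Y20' Y21' S20' S21' = cond_mean M D U1 - cond_mean M D L0"
    by (rule sharp) (use T1(2) T0(1) in \<open>auto simp: U1_def L0_def\<close>)
  show ?thesis unfolding LB UB ATT using b1 b2 b3 b4 s1 s2 by auto
qed

end
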